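(* Let $s=\tfrac12$ and $\lambda\in\mathbb{C}$. The space of even superderivations of $\mathfrak{L}^{1/2}_\lambda$ of degree $0$ equals $$\mathrm{span}_{\mathbb{C}}\{\mathrm{ad}\,L_0,\ \mathrm{ad}\,I_0\}\oplus\mathbb{C}\,\partial_G\oplus\delta_{\lambda,0}\,\mathbb{C}\,\partial_D,$$ where the last summand is $\mathbb{C}\partial_D$ if $\lambda=0$ and $\{0\}$ if $\lambda\neq0$. In particular $\partial_G$ is a superderivation for every $\lambda$, and $\partial_D$ is a superderivation when $\lambda=0$.
   Context: For $s\in\{0,\tfrac12\}$ and $\lambda\in\mathbb{C}$, $\mathfrak{L}^s_\lambda$ is the complex Lie superalgebra with basis $\{L_m,I_m,G_p,H_p : m\in\mathbb{Z},\ p\in s+\mathbb{Z}\}$, even part spanned by the $L_m,I_m$, odd part spanned by the $G_p,H_p$, and brackets $[L_m,L_n]=(m-n)L_{m+n}$, $[L_m,I_n]=(m-n)I_{m+n}$, $[L_m,H_p]=(\tfrac m2-p)H_{m+p}$, $[L_m,G_p]=(\tfrac m2-p)G_{m+p}+\lambda(m+1)H_{m+p}$, $[I_m,G_p]=(m-2p)H_{m+p}$, $[G_p,G_q]=I_{p+q}$, plus those given by super-antisymmetry $[y,x]=-(-1)^{|x||y|}[x,y]$; all other brackets of basis elements are zero. $\mathfrak{L}_r$ is spanned by basis elements of index $r$. A superderivation of parity $a$ is a linear map $D$ shifting parity by $a$ with $D([x,y])=[D(x),y]+(-1)^{a|x|}[x,D(y)]$; it has degree $r$ if $D(\mathfrak{L}_q)\subset\mathfrak{L}_{q+r}$.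 $\mathrm{ad}\,x(y)=[x,y]$. The linear maps $\partial_G,\partial_D$ (called $\partial_4,\partial_3$ in the paper for $s=\tfrac12$) are defined by $\partial_G(L_m)=\partial_G(I_m)=\partial_G(H_p)=0$, $\partial_G(G_p)=H_p$; $\partial_D(L_m)=0$, $\partial_D(I_m)=2I_m$, $\partial_D(G_p)=G_p$, $\partial_D(H_p)=3H_p$. *)

theory Defs
  imports Complex_Main
begin

text \<open>Basis of the Lie superalgebra with s = 1/2.
  Lb m = L_m, Ib m = I_m (m integer); Gb k = G_(k+1/2), Hb k = H_(k+1/2).\<close>
datatype basis = Lb int | Ib int | Gb int | Hb int

definition Vsp :: "(basis \<Rightarrow> complex) set" where
  "Vsp = {x. finite {b. x b \<noteq> 0}}"

definition ev :: "basis \<Rightarrow> basis \<Rightarrow> complex" where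
  "ev b = (\<lambda>c. if c = b then 1 else 0)"

fun evenb :: "basis \<Rightarrow> bool" where
  "evenb (Lb _) = True" | "evenb (Ib _) = True" | "evenb (Gb _) = False" | "evenb (Hb _) = False"

fun idx :: "basis \<Rightarrow> real" where
  "idx (Lb m) = of_int m" | "idx (Ib m) = of_int m"
| "idx (Gb k) = of_int k + 1/2" | "idx (Hb k) = of_int k + 1/2"

definition hp :: "int \<Rightarrow> complex" where "hp k = of_int k + 1/2"

fun brb :: "complex \<Rightarrow> basis \<Rightarrow> basis \<Rightarrow> basis \<Rightarrow> complex" where
  "brb lam (Lb m) (Lb n) = (\<lambda>c. of_int (m - n) * ev (Lb (m + n)) c)"
| "brb lam (Lb m) (Ib n) = (\<lambda>c. of_int (m - n) * ev (Ib (m + n)) c)"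
| "brb lam (Ib n) (Lb m) = (\<lambda>c. - (of_int (m - n) * ev (Ib (m + n)) c))"
| "brb lam (Lb m) (Hb k) = (\<lambda>c. (of_int m / 2 - hp k) * ev (Hb (m + k)) c)"
| "brb lam (Hb k) (Lb m) = (\<lambda>c. - ((of_int m / 2 - hp k) * ev (Hb (m + k)) c))"
| "brb lam (Lb m) (Gb k) = (\<lambda>c. (of_int m / 2 - hp k) * ev (Gb (m + k)) c
                                  + lam * (of_int m + 1) * ev (Hb (m + k)) c)"
| "brb lam (Gb k) (Lb m) = (\<lambda>c. - ((of_int m / 2 - hp k) * ev (Gb (m + k)) c
                                  + lam * (of_int m + 1) * ev (Hb (m + k)) c))"
| "brb lam (Ib m) (Gb k) = (\<lambda>c. (of_int m - 2 * hp k) * ev (Hb (m + k)) c)"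
| "brb lam (Gb k) (Ib m) = (\<lambda>c. - ((of_int m - 2 * hp k) * ev (Hb (m + k)) c))"
| "brb lam (Gb k) (Gb l) = (\<lambda>c. ev (Ib (k + l + 1)) c)"
| "brb lam _ _ = (\<lambda>c. 0)"

definition br :: "complex \<Rightarrow> (basis \<Rightarrow> complex) \<Rightarrow> (basis \<Rightarrow> complex) \<Rightarrow> basis \<Rightarrow> complex" where
  "br lam x y = (\<lambda>c. \<Sum>a\<in>{a. x a \<noteq> 0}. \<Sum>b\<in>{b. y b \<noteq> 0}. x a * y b * brb lam a b c)"

definition ad :: "complex \<Rightarrow> (basis \<Rightarrow> complex) \<Rightarrow> (basis \<Rightarrow> complex) \<Rightarrow> basis \<Rightarrow> complex" where
  "ad lam x = br lam x"

definition partialG :: "(basis \<Rightarrow> complex) \<Rightarrow> basis \<Rightarrow> complex" where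
  "partialG x = (\<lambda>c. case c of Hb k \<Rightarrow> x (Gb k) | _ \<Rightarrow> 0)"

definition partialD :: "(basis \<Rightarrow> complex) \<Rightarrow> basis \<Rightarrow> complex" where
  "partialD x = (\<lambda>c. case c of Lb m \<Rightarrow> 0 | Ib m \<Rightarrow> 2 * x (Ib m)
                                | Gb k \<Rightarrow> x (Gb k) | Hb k \<Rightarrow> 3 * x (Hb k))"

definition even_superder_deg0 :: "complex \<Rightarrow> ((basis \<Rightarrow> complex) \<Rightarrow> basis \<Rightarrow> complex) \<Rightarrow> bool" where
  "even_superder_deg0 lam D \<longleftrightarrow>
     (\<forall>x\<in>Vsp. D x \<in> Vsp)
   \<and> (\<forall>x\<in>Vsp. \<forall>y\<in>Vsp. D (\<lambda>b. x b + y b) = (\<lambda>b. D x b + D y b))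
   \<and> (\<forall>a. \<forall>x\<in>Vsp. D (\<lambda>b. a * x b) = (\<lambda>b. a * D x b))
   \<and> (\<forall>x\<in>Vsp. (\<forall>b. x b \<noteq> 0 \<longrightarrow> evenb b) \<longrightarrow> (\<forall>b. D x b \<noteq> 0 \<longrightarrow> evenb b))
   \<and> (\<forall>x\<in>Vsp. (\<forall>b. x b \<noteq> 0 \<longrightarrow> \<not> evenb b) \<longrightarrow> (\<forall>b. D x b \<noteq> 0 \<longrightarrow> \<not> evenb b))
   \<and> (\<forall>q. \<forall>x\<in>Vsp. (\<forall>b. x b \<noteq> 0 \<longrightarrow> idx b = q) \<longrightarrow> (\<forall>b. D x b \<noteq> 0 \<longrightarrow> idx b = q))
   \<and> (\<forall>x\<in>Vsp. \<forall>y\<in>Vsp. D (br lam x y) = (\<lambda>c. br lam (D x) y c + br lam x (D y) c))"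

end

theory Submission
  imports Defs
begin



lemma ev_same[simp]: "ev u u = 1" by (simp add: ev_def)
lemma supp_ev[simp]: "{b. ev u b \<noteq> 0} = {u}" by (auto simp: ev_def)
lemma ev_Vsp[simp]: "ev u \<in> Vsp" by (simp add: Vsp_def)

lemma Vsp_add: "x \<in> Vsp \<Longrightarrow> y \<in> Vsp \<Longrightarrow> (\<lambda>b. x b + y b) \<in> Vsp"
  unfolding Vsp_def mem_Collect_eq by (rule finite_subset[of _ "{b. x b \<noteq> 0} \<union> {b. y b \<noteq> 0}"]) auto
lemma Vsp_smult: "x \<in> Vsp \<Longrightarrow> (\<lambda>b. a * x b) \<in> Vsp"
  unfolding Vsp_def mem_Collect_eq by (rule finite_subset[of _ "{b. x b \<noteq> 0}"]) auto
lemma Vsp_zero[simp]: "(\<lambda>b. 0) \<in> Vsp" by (simp add: Vsp_def)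
lemma Vsp_sum: "finite S \<Longrightarrow> (\<And>u. u \<in> S \<Longrightarrow> g u \<in> Vsp) \<Longrightarrow> (\<lambda>t. \<Sum>u\<in>S. g u t) \<in> Vsp"
proof (induction S rule: finite_induct)
  case (insert x F)
  have "(\<lambda>t. \<Sum>u\<in>insert x F. g u t) = (\<lambda>t. g x t + (\<lambda>t. \<Sum>u\<in>F. g u t) t)"
    using insert by simp
  then show ?case using insert Vsp_add by simp
qed simp

fun ix :: "basis \<Rightarrow> int" where
  "ix (Lb m) = m" | "ix (Ib m) = m" | "ix (Gb m) = m" | "ix (Hb m) = m"

lemma brb_supp0: "c \<notin> {Lb (ix u + ix v), Ib (ix u + ix v), Ib (ix u + ix v + 1), Gb (ix u + ix v), Hb (ix u + ix v)} \<Longrightarrow> brb lam u v c = 0"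
  by (cases u; cases v) (simp_all add: ev_def add.commute)
lemma brb_supp: "brb lam u v c \<noteq> 0 \<Longrightarrow> c \<in> {Lb (ix u + ix v), Ib (ix u + ix v), Ib (ix u + ix v + 1), Gb (ix u + ix v), Hb (ix u + ix v)}"
  using brb_supp0 by blast

lemma brb_Vsp[simp]: "brb lam u v \<in> Vsp"
proof -
  have "{c. brb lam u v c \<noteq> 0} \<subseteq> {Lb (ix u + ix v), Ib (ix u + ix v), Ib (ix u + ix v + 1), Gb (ix u + ix v), Hb (ix u + ix v)}"
    using brb_supp by blast
  then show ?thesis unfolding Vsp_def mem_Collect_eq by (rule finite_subset) simp
qed

lemma br_alt:
  assumes "finite A" "finite B" "{a. x a \<noteq> 0} \<subseteq> A" "{b. y b \<noteq> 0} \<subseteq> B"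
  shows "br lam x y c = (\<Sum>a\<in>A. \<Sum>b\<in>B. x a * y b * brb lam a b c)"
proof -
  have i: "(\<Sum>b\<in>{b. y b \<noteq> 0}. x a * y b * brb lam a b c) = (\<Sum>b\<in>B. x a * y b * brb lam a b c)" for a
    by (rule sum.mono_neutral_left) (use assms in auto)
  have "br lam x y c = (\<Sum>a\<in>{a. x a \<noteq> 0}. \<Sum>b\<in>B. x a * y b * brb lam a b c)"
    unfolding br_def using i by simp
  also have "\<dots> = (\<Sum>a\<in>A. \<Sum>b\<in>B. x a * y b * brb lam a b c)"
    by (rule sum.mono_neutral_left) (use assms in auto)
  finally show ?thesis .
qed

lemma br_Vsp: "x \<in> Vsp \<Longrightarrow> y \<in> Vsp \<Longrightarrow> br lam x y \<in> Vsp"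
  unfolding br_def
  by (intro Vsp_sum Vsp_smult) (auto simp: Vsp_def brb_Vsp[unfolded Vsp_def, simplified])

lemma br_ev_ev[simp]: "br lam (ev u) (ev v) = brb lam u v"
  by (simp add: br_def)

definition lin :: "((basis \<Rightarrow> complex) \<Rightarrow> basis \<Rightarrow> complex) \<Rightarrow> bool" where
  "lin L \<longleftrightarrow> (\<forall>x\<in>Vsp. \<forall>y\<in>Vsp. L (\<lambda>b. x b + y b) = (\<lambda>b. L x b + L y b))
    \<and> (\<forall>a. \<forall>x\<in>Vsp. L (\<lambda>b. a * x b) = (\<lambda>b. a * L x b))"

lemma lin_add: "lin L \<Longrightarrow> x \<in> Vsp \<Longrightarrow> y \<in> Vsp \<Longrightarrow> L (\<lambda>b. x b + y b) = (\<lambda>b. L x b + L y b)"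
  unfolding lin_def by blast
lemma lin_hom: "lin L \<Longrightarrow> x \<in> Vsp \<Longrightarrow> L (\<lambda>b. a * x b) = (\<lambda>b. a * L x b)"
  unfolding lin_def by blast
lemma lin_zero: "lin L \<Longrightarrow> L (\<lambda>b. 0) = (\<lambda>b. 0)"
  using lin_hom[of L "\<lambda>b. 0" 0] by simp

lemma lin_sum:
  assumes "lin L" "finite S" "\<And>u. u \<in> S \<Longrightarrow> g u \<in> Vsp"
  shows "L (\<lambda>t. \<Sum>u\<in>S. f u * g u t) = (\<lambda>t. \<Sum>u\<in>S. f u * L (g u) t)"
  using assms(2,3)
proof (induction S rule: finite_induct)
  case empty
  then show ?case using lin_zero[OF assms(1)] by simp
next
  case (insert x F)
  have V0: "g x \<in> Vsp" using insert by auto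
  have V1: "(\<lambda>t. f x * g x t) \<in> Vsp" using V0 Vsp_smult by auto
  have V2: "(\<lambda>t. \<Sum>u\<in>F. f u * g u t) \<in> Vsp" using insert by (intro Vsp_sum Vsp_smult) auto
  have IH: "L (\<lambda>t. \<Sum>u\<in>F. f u * g u t) = (\<lambda>t. \<Sum>u\<in>F. f u * L (g u) t)"
    using insert by auto
  have e: "(\<lambda>t. \<Sum>u\<in>insert x F. f u * g u t) = (\<lambda>t. f x * g x t + (\<Sum>u\<in>F. f u * g u t))"
    using insert by simp
  have "L (\<lambda>t. f x * g x t + (\<Sum>u\<in>F. f u * g u t)) = (\<lambda>t. L (\<lambda>t. f x * g x t) t + L (\<lambda>t. \<Sum>u\<in>F. f u * g u t) t)"
    using lin_add[OF assms(1) V1 V2] by simp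
  also have "\<dots> = (\<lambda>t. f x * L (g x) t + (\<Sum>u\<in>F. f u * L (g u) t))"
    unfolding IH lin_hom[OF assms(1) V0] by simp
  also have "\<dots> = (\<lambda>t. \<Sum>u\<in>insert x F. f u * L (g u) t)"
    using insert by simp
  finally show ?case unfolding e .
qed

lemma expand: "x \<in> Vsp \<Longrightarrow> x = (\<lambda>t. \<Sum>u\<in>{b. x b \<noteq> 0}. x u * ev u t)"
proof
  fix t assume "x \<in> Vsp"
  have "(\<Sum>u\<in>{b. x b \<noteq> 0}. x u * ev u t) = (\<Sum>u\<in>{b. x b \<noteq> 0}. if t = u then x u else 0)"
    by (rule sum.cong) (auto simp: ev_def)
  also have "\<dots> = x t" using \<open>x \<in> Vsp\<close> by (simp add: Vsp_def)
  finally show "x t = (\<lambda>t. \<Sum>u\<in>{b. x b \<noteq> 0}. x u * ev u t) t" by simp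
qed

lemma lin_expand: "lin L \<Longrightarrow> x \<in> Vsp \<Longrightarrow> L x = (\<lambda>t. \<Sum>u\<in>{b. x b \<noteq> 0}. x u * L (ev u) t)"
proof -
  assume l: "lin L" and x: "x \<in> Vsp"
  have "L x = L (\<lambda>t. \<Sum>u\<in>{b. x b \<noteq> 0}. x u * ev u t)" using expand[OF x] by (rule arg_cong)
  also have "\<dots> = (\<lambda>t. \<Sum>u\<in>{b. x b \<noteq> 0}. x u * L (ev u) t)"
    by (rule lin_sum[OF l]) (use x in \<open>auto simp: Vsp_def\<close>)
  finally show ?thesis .
qed

lemma lin_eq: "lin L1 \<Longrightarrow> lin L2 \<Longrightarrow> (\<And>u. L1 (ev u) = L2 (ev u)) \<Longrightarrow> x \<in> Vsp \<Longrightarrow> L1 x = L2 x"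
proof -
  assume a: "lin L1" "lin L2" "\<And>u. L1 (ev u) = L2 (ev u)" "x \<in> Vsp"
  have "L1 x = (\<lambda>t. \<Sum>u\<in>{b. x b \<noteq> 0}. x u * L1 (ev u) t)" by (rule lin_expand[OF a(1) a(4)])
  also have "\<dots> = (\<lambda>t. \<Sum>u\<in>{b. x b \<noteq> 0}. x u * L2 (ev u) t)" by (simp only: a(3))
  also have "\<dots> = L2 x" by (rule lin_expand[OF a(2) a(4), symmetric])
  finally show ?thesis .
qed

lemma br_add_left:
  assumes a: "x1 \<in> Vsp" "x2 \<in> Vsp" "y \<in> Vsp"
  shows "br lam (\<lambda>b. x1 b + x2 b) y c = br lam x1 y c + br lam x2 y c"
proof -
  let ?A = "{a. x1 a \<noteq> 0} \<union> {a. x2 a \<noteq> 0}" and ?B = "{b. y b \<noteq> 0}"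
  have f: "finite ?A" "finite ?B" using a by (auto simp: Vsp_def)
  have 1: "br lam (\<lambda>b. x1 b + x2 b) y c = (\<Sum>a\<in>?A. \<Sum>b\<in>?B. (x1 a + x2 a) * y b * brb lam a b c)"
    by (rule br_alt) (use f in auto)
  have 2: "br lam x1 y c = (\<Sum>a\<in>?A. \<Sum>b\<in>?B. x1 a * y b * brb lam a b c)"
    by (rule br_alt) (use f in auto)
  have 3: "br lam x2 y c = (\<Sum>a\<in>?A. \<Sum>b\<in>?B. x2 a * y b * brb lam a b c)"
    by (rule br_alt) (use f in auto)
  show ?thesis unfolding 1 2 3 by (simp only: distrib_right sum.distrib)
qed

lemma br_smult_left:
  assumes a: "x \<in> Vsp" "y \<in> Vsp"
  shows "br lam (\<lambda>b. r * x b) y c = r * br lam x y c"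
proof -
  let ?A = "{a. x a \<noteq> 0}" and ?B = "{b. y b \<noteq> 0}"
  have f: "finite ?A" "finite ?B" using a by (auto simp: Vsp_def)
  have 1: "br lam (\<lambda>b. r * x b) y c = (\<Sum>a\<in>?A. \<Sum>b\<in>?B. (r * x a) * y b * brb lam a b c)"
    by (rule br_alt) (use f in auto)
  have 2: "br lam x y c = (\<Sum>a\<in>?A. \<Sum>b\<in>?B. x a * y b * brb lam a b c)"
    by (rule br_alt) (use f in auto)
  show ?thesis unfolding 1 2 by (simp only: sum_distrib_left mult.assoc)
qed

lemma br_add_right:
  assumes a: "y1 \<in> Vsp" "y2 \<in> Vsp" "x \<in> Vsp"
  shows "br lam x (\<lambda>b. y1 b + y2 b) c = br lam x y1 c + br lam x y2 c"
proof -
  let ?B = "{a. y1 a \<noteq> 0} \<union> {a. y2 a \<noteq> 0}" and ?A = "{b. x b \<noteq> 0}"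
  have f: "finite ?A" "finite ?B" using a by (auto simp: Vsp_def)
  have 1: "br lam x (\<lambda>b. y1 b + y2 b) c = (\<Sum>a\<in>?A. \<Sum>b\<in>?B. x a * (y1 b + y2 b) * brb lam a b c)"
    by (rule br_alt) (use f in auto)
  have 2: "br lam x y1 c = (\<Sum>a\<in>?A. \<Sum>b\<in>?B. x a * y1 b * brb lam a b c)"
    by (rule br_alt) (use f in auto)
  have 3: "br lam x y2 c = (\<Sum>a\<in>?A. \<Sum>b\<in>?B. x a * y2 b * brb lam a b c)"
    by (rule br_alt) (use f in auto)
  show ?thesis unfolding 1 2 3 by (simp add: ring_distribs sum.distrib)
qed

lemma br_smult_right:
  assumes a: "x \<in> Vsp" "y \<in> Vsp"
  shows "br lam x (\<lambda>b. r * y b) c = r * br lam x y c"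
proof -
  let ?A = "{a. x a \<noteq> 0}" and ?B = "{b. y b \<noteq> 0}"
  have f: "finite ?A" "finite ?B" using a by (auto simp: Vsp_def)
  have 1: "br lam x (\<lambda>b. r * y b) c = (\<Sum>a\<in>?A. \<Sum>b\<in>?B. x a * (r * y b) * brb lam a b c)"
    by (rule br_alt) (use f in auto)
  have 2: "br lam x y c = (\<Sum>a\<in>?A. \<Sum>b\<in>?B. x a * y b * brb lam a b c)"
    by (rule br_alt) (use f in auto)
  have e: "\<And>a b. x a * (r * y b) * brb lam a b c = r * (x a * y b * brb lam a b c)" by simp
  show ?thesis unfolding 1 2 by (simp add: sum_distrib_left mult_ac)
qed

lemma lin_brl: "y \<in> Vsp \<Longrightarrow> lin (\<lambda>x. br lam x y)"
  unfolding lin_def by (auto simp: fun_eq_iff br_add_left br_smult_left)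

lemma lin_brr: "x \<in> Vsp \<Longrightarrow> lin (br lam x)"
  unfolding lin_def by (auto simp: fun_eq_iff br_add_right br_smult_right)




fun flip :: "basis \<Rightarrow> basis" where
  "flip (Lb m) = Ib m" | "flip (Ib m) = Lb m" | "flip (Gb k) = Hb k" | "flip (Hb k) = Gb k"

lemma flip_flip[simp]: "flip (flip u) = u" by (cases u) auto
lemma flip_neq[simp]: "flip u \<noteq> u" "u \<noteq> flip u" by (cases u; auto)+
lemma evenb_flip[simp]: "evenb (flip u) = evenb u" by (cases u) auto
lemma idx_flip[simp]: "idx (flip u) = idx u" by (cases u) auto

lemma same_class: "evenb t = evenb u \<Longrightarrow> idx t = idx u \<Longrightarrow> t = u \<or> t = flip u"
  by (cases t; cases u) auto

definition Tf :: "complex \<Rightarrow> complex \<Rightarrow> complex \<Rightarrow> complex \<Rightarrow> complex \<Rightarrow> (basis \<Rightarrow> complex) \<Rightarrow> basis \<Rightarrow> complex" where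
 "Tf lam a b c d x = (\<lambda>t. case t of Lb m \<Rightarrow> - a * of_int m * x (Lb m)
   | Ib m \<Rightarrow> - b * of_int m * x (Lb m) + (2*d - a * of_int m) * x (Ib m)
   | Gb k \<Rightarrow> (d - a * hp k) * x (Gb k)
   | Hb k \<Rightarrow> (a * lam - 2 * b * hp k + c) * x (Gb k) + (3*d - a * hp k) * x (Hb k))"

lemma lin_Tf: "lin (Tf lam a b c d)"
  unfolding lin_def Tf_def by (auto simp: fun_eq_iff algebra_simps split: basis.split)

lemma Tf_supp: "Tf lam a b c d x t \<noteq> 0 \<Longrightarrow> x t \<noteq> 0 \<or> x (flip t) \<noteq> 0"
  by (cases t) (auto simp: Tf_def)

lemma Tf_Vsp: "x \<in> Vsp \<Longrightarrow> Tf lam a b c d x \<in> Vsp"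
proof -
  assume x: "x \<in> Vsp"
  have "{t. Tf lam a b c d x t \<noteq> 0} \<subseteq> {t. x t \<noteq> 0} \<union> flip ` {t. x t \<noteq> 0}"
  proof
    fix t assume "t \<in> {t. Tf lam a b c d x t \<noteq> 0}"
    then have "x t \<noteq> 0 \<or> x (flip t) \<noteq> 0" using Tf_supp by auto
    then show "t \<in> {t. x t \<noteq> 0} \<union> flip ` {t. x t \<noteq> 0}"
      by (metis (mono_tags, lifting) Un_iff flip_flip image_eqI mem_Collect_eq)
  qed
  moreover have "finite ({t. x t \<noteq> 0} \<union> flip ` {t. x t \<noteq> 0})" using x by (simp add: Vsp_def)
  ultimately show ?thesis unfolding Vsp_def mem_Collect_eq by (rule finite_subset)
qed

lemma Tf_ev_form: "Tf lam a b c d (ev u) = (\<lambda>t. Tf lam a b c d (ev u) u * ev u t + Tf lam a b c d (ev u) (flip u) * ev (flip u) t)"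
  by (cases u) (auto simp: fun_eq_iff Tf_def ev_def split: basis.split)

lemma lin_ad: "z \<in> Vsp \<Longrightarrow> lin (ad lam z)"
  unfolding ad_def by (rule lin_brr)

lemma lin_pG: "lin partialG"
  unfolding lin_def partialG_def by (auto simp: fun_eq_iff split: basis.split)
lemma lin_pD: "lin partialD"
  unfolding lin_def partialD_def by (auto simp: fun_eq_iff algebra_simps split: basis.split)

definition TT where "TT lam a b c d = (\<lambda>x t. a * ad lam (ev (Lb 0)) x t + b * ad lam (ev (Ib 0)) x t
                            + c * partialG x t + d * partialD x t)"

lemma lin_TT: "lin (TT lam a b c d)"
proof -
  have l1: "lin (ad lam (ev (Lb 0)))" "lin (ad lam (ev (Ib 0)))" by (simp_all add: lin_ad)
  show ?thesis unfolding lin_def TT_def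
    using lin_add[OF l1(1)] lin_add[OF l1(2)] lin_add[OF lin_pG] lin_add[OF lin_pD]
      lin_hom[OF l1(1)] lin_hom[OF l1(2)] lin_hom[OF lin_pG] lin_hom[OF lin_pD]
    by (auto simp: fun_eq_iff algebra_simps)
qed

lemma TT_ev: "TT lam a b c d (ev u) = Tf lam a b c d (ev u)"
  unfolding TT_def ad_def br_ev_ev
  by (cases u) (auto simp: Tf_def partialG_def partialD_def ev_def hp_def fun_eq_iff algebra_simps split: basis.split)

lemma TT_Tf: "x \<in> Vsp \<Longrightarrow> TT lam a b c d x = Tf lam a b c d x"
  by (rule lin_eq[OF lin_TT lin_Tf TT_ev])




lemma Tf_brb:
  assumes "lam = 0 \<or> d = 0"
  shows "Tf lam a b c d (brb lam u v) t = Tf lam a b c d (ev u) u * brb lam u v t + Tf lam a b c d (ev u) (flip u) * brb lam (flip u) v t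
       + Tf lam a b c d (ev v) v * brb lam u v t + Tf lam a b c d (ev v) (flip v) * brb lam u (flip v) t"
  using assms by (cases u; cases v; cases t) (auto simp: Tf_def ev_def hp_def field_simps)




lemma br_sum_left:
  assumes "finite S" "\<And>u. u \<in> S \<Longrightarrow> g u \<in> Vsp" "y \<in> Vsp"
  shows "br lam (\<lambda>t. \<Sum>u\<in>S. f u * g u t) y c = (\<Sum>u\<in>S. f u * br lam (g u) y c)"
  using lin_sum[OF lin_brl[of y lam] assms(1,2), where f=f] assms(3) by (simp add: fun_eq_iff)

lemma br_sum_right:
  assumes "finite S" "\<And>u. u \<in> S \<Longrightarrow> g u \<in> Vsp" "x \<in> Vsp"
  shows "br lam x (\<lambda>t. \<Sum>u\<in>S. f u * g u t) c = (\<Sum>u\<in>S. f u * br lam x (g u) c)"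
  using lin_sum[OF lin_brr[of x lam] assms(1,2), where f=f] assms(3) by (simp add: fun_eq_iff)

lemma deriv_extend:
  assumes l: "lin L" and LV: "\<And>x. x \<in> Vsp \<Longrightarrow> L x \<in> Vsp"
    and bas: "\<And>u v. L (brb lam u v) = (\<lambda>c. br lam (L (ev u)) (ev v) c + br lam (ev u) (L (ev v)) c)"
    and x: "x \<in> Vsp" and y: "y \<in> Vsp"
  shows "L (br lam x y) = (\<lambda>c. br lam (L x) y c + br lam x (L y) c)"
proof
  fix c
  define Sx where "Sx = {a. x a \<noteq> 0}"
  define Sy where "Sy = {a. y a \<noteq> 0}"
  have fx: "finite Sx" and fy: "finite Sy" using x y by (auto simp: Vsp_def Sx_def Sy_def)
  have ex: "x = (\<lambda>t. \<Sum>u\<in>Sx. x u * ev u t)" using expand[OF x] by (simp add: Sx_def)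
  have ey: "y = (\<lambda>t. \<Sum>u\<in>Sy. y u * ev u t)" using expand[OF y] by (simp add: Sy_def)
  have Lx: "L x = (\<lambda>t. \<Sum>u\<in>Sx. x u * L (ev u) t)" using lin_expand[OF l x] by (simp add: Sx_def)
  have Ly: "L y = (\<lambda>t. \<Sum>u\<in>Sy. y u * L (ev u) t)" using lin_expand[OF l y] by (simp add: Sy_def)
  have b1: "br lam x y = (\<lambda>c. \<Sum>p\<in>Sx \<times> Sy. (x (fst p) * y (snd p)) * brb lam (fst p) (snd p) c)"
    unfolding br_def Sx_def Sy_def by (simp add: sum.cartesian_product case_prod_beta)
  have "L (br lam x y) c = (\<Sum>p\<in>Sx \<times> Sy. (x (fst p) * y (snd p)) * L (brb lam (fst p) (snd p)) c)"
    unfolding b1 by (subst lin_sum[OF l]) (use fx fy in auto)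
  also have "\<dots> = (\<Sum>p\<in>Sx \<times> Sy. (x (fst p) * y (snd p)) * (br lam (L (ev (fst p))) (ev (snd p)) c + br lam (ev (fst p)) (L (ev (snd p))) c))"
    by (simp add: bas)
  also have "\<dots> = (\<Sum>a\<in>Sx. \<Sum>b\<in>Sy. x a * (y b * br lam (L (ev a)) (ev b) c))
     + (\<Sum>a\<in>Sx. \<Sum>b\<in>Sy. x a * (y b * br lam (ev a) (L (ev b)) c))"
    by (simp add: sum.cartesian_product case_prod_beta sum.distrib distrib_left mult_ac)
  also have "(\<Sum>a\<in>Sx. \<Sum>b\<in>Sy. x a * (y b * br lam (L (ev a)) (ev b) c)) = br lam (L x) y c"
  proof -
    have "br lam (L x) y c = (\<Sum>a\<in>Sx. x a * br lam (L (ev a)) y c)"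
      unfolding Lx by (rule br_sum_left) (use fx y LV in auto)
    also have "\<dots> = (\<Sum>a\<in>Sx. x a * (\<Sum>b\<in>Sy. y b * br lam (L (ev a)) (ev b) c))"
    proof (rule sum.cong[OF refl])
      fix a
      have "br lam (L (ev a)) y c = br lam (L (ev a)) (\<lambda>t. \<Sum>u\<in>Sy. y u * ev u t) c"
        using ey by metis
      also have "\<dots> = (\<Sum>b\<in>Sy. y b * br lam (L (ev a)) (ev b) c)"
        by (rule br_sum_right) (use fy LV in auto)
      finally show "x a * br lam (L (ev a)) y c = x a * (\<Sum>b\<in>Sy. y b * br lam (L (ev a)) (ev b) c)" by simp
    qed
    finally show ?thesis by (simp add: sum_distrib_left)
  qed
  also have "(\<Sum>a\<in>Sx. \<Sum>b\<in>Sy. x a * (y b * br lam (ev a) (L (ev b)) c)) = br lam x (L y) c"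
  proof -
    have "br lam x (L y) c = (\<Sum>b\<in>Sy. y b * br lam x (L (ev b)) c)"
      unfolding Ly by (rule br_sum_right) (use fy x LV in auto)
    also have "\<dots> = (\<Sum>b\<in>Sy. y b * (\<Sum>a\<in>Sx. x a * br lam (ev a) (L (ev b)) c))"
    proof (rule sum.cong[OF refl])
      fix b
      have "br lam x (L (ev b)) c = br lam (\<lambda>t. \<Sum>u\<in>Sx. x u * ev u t) (L (ev b)) c"
        using ex by metis
      also have "\<dots> = (\<Sum>a\<in>Sx. x a * br lam (ev a) (L (ev b)) c)"
        by (rule br_sum_left) (use fx LV in auto)
      finally show "y b * br lam x (L (ev b)) c = y b * (\<Sum>a\<in>Sx. x a * br lam (ev a) (L (ev b)) c)" by simp
    qed
    finally show ?thesis by (simp add: sum_distrib_left sum.swap[of _ Sy Sx] mult_ac)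
  qed
  finally show "L (br lam x y) c = (\<lambda>c. br lam (L x) y c + br lam x (L y) c) c" by simp
qed




lemma br_form_left:
  assumes "z = (\<lambda>t. p * ev u t + q * ev w t)" "y \<in> Vsp"
  shows "br lam z y c = p * br lam (ev u) y c + q * br lam (ev w) y c"
proof -
  have "br lam z y c = br lam (\<lambda>t. p * ev u t) y c + br lam (\<lambda>t. q * ev w t) y c"
    unfolding assms(1) by (rule br_add_left) (auto intro: Vsp_smult assms(2))
  then show ?thesis by (simp add: br_smult_left assms(2))
qed

lemma br_form_right:
  assumes "z = (\<lambda>t. p * ev u t + q * ev w t)" "y \<in> Vsp"
  shows "br lam y z c = p * br lam y (ev u) c + q * br lam y (ev w) c"
proof -
  have "br lam y z c = br lam y (\<lambda>t. p * ev u t) c + br lam y (\<lambda>t. q * ev w t) c"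
    unfolding assms(1) by (rule br_add_right) (auto intro: Vsp_smult assms(2))
  then show ?thesis by (simp add: br_smult_right assms(2))
qed

lemma Tf_der:
  assumes "lam = 0 \<or> d = 0" "x \<in> Vsp" "y \<in> Vsp"
  shows "Tf lam a b c d (br lam x y) = (\<lambda>t. br lam (Tf lam a b c d x) y t + br lam x (Tf lam a b c d y) t)"
proof (rule deriv_extend[OF lin_Tf Tf_Vsp _ assms(2,3)])
  fix u v
  show "Tf lam a b c d (brb lam u v) = (\<lambda>t. br lam (Tf lam a b c d (ev u)) (ev v) t + br lam (ev u) (Tf lam a b c d (ev v)) t)"
    by (auto simp: fun_eq_iff Tf_brb[OF assms(1)] br_form_left[OF Tf_ev_form] br_form_right[OF Tf_ev_form])
qed

lemma backward:
  assumes "lam = 0 \<or> d = 0" and DT: "\<forall>x\<in>Vsp. D x = Tf lam a b c d x"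
  shows "even_superder_deg0 lam D"
  unfolding even_superder_deg0_def
proof (intro conjI)
  show "\<forall>x\<in>Vsp. D x \<in> Vsp" using DT Tf_Vsp by simp
  show "\<forall>x\<in>Vsp. \<forall>y\<in>Vsp. D (\<lambda>b. x b + y b) = (\<lambda>b. D x b + D y b)"
    using DT Vsp_add lin_add[OF lin_Tf] by simp
  show "\<forall>a. \<forall>x\<in>Vsp. D (\<lambda>b. a * x b) = (\<lambda>b. a * D x b)"
    using DT Vsp_smult lin_hom[OF lin_Tf] by simp
  show "\<forall>x\<in>Vsp. (\<forall>b. x b \<noteq> 0 \<longrightarrow> evenb b) \<longrightarrow> (\<forall>b. D x b \<noteq> 0 \<longrightarrow> evenb b)"
    using DT Tf_supp by (metis evenb_flip)
  show "\<forall>x\<in>Vsp. (\<forall>b. x b \<noteq> 0 \<longrightarrow> \<not> evenb b) \<longrightarrow> (\<forall>b. D x b \<noteq> 0 \<longrightarrow> \<not> evenb b)"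
    using DT Tf_supp by (metis evenb_flip)
  show "\<forall>q. \<forall>x\<in>Vsp. (\<forall>b. x b \<noteq> 0 \<longrightarrow> idx b = q) \<longrightarrow> (\<forall>b. D x b \<noteq> 0 \<longrightarrow> idx b = q)"
    using DT Tf_supp by (metis idx_flip)
  show "\<forall>x\<in>Vsp. \<forall>y\<in>Vsp. D (br lam x y) = (\<lambda>c. br lam (D x) y c + br lam x (D y) c)"
    using DT br_Vsp Tf_der[OF assms(1)] by simp
qed




lemma ev_apply: "ev u t = (if t = u then 1 else 0)" by (simp add: ev_def)

lemma additive:
  fixes f :: "int \<Rightarrow> complex"
  assumes h: "\<And>m n. m \<noteq> n \<Longrightarrow> f (m + n) = f m + f n"
  shows "f m = of_int m * f 1"
proof -
  have f0: "f 0 = 0" using h[of 0 1] by simp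
  have "f 1 + f (-1) = 0" using h[of 1 "-1"] f0 by simp
  then have fm1: "f (-1) = - f 1" by (metis add.commute add_eq_0_iff2)
  have f2: "f 2 = 2 * f 1" using h[of 2 "-1"] fm1 by simp
  have nat: "f (int n) = of_nat n * f 1" for n
  proof (induction n)
    case 0 then show ?case using f0 by simp
  next
    case (Suc n)
    show ?case
    proof (cases "n = 1")
      case True then show ?thesis using f2 by simp
    next
      case False
      then have "f (int n + 1) = f (int n) + f 1" using h[of "int n" 1] by simp
      then show ?thesis using Suc by (simp add: algebra_simps)
    qed
  qed
  have neg: "f (- n) = - f n" for n
  proof (cases "n = 0")
    case True then show ?thesis using f0 by simp
  next
    case False
    then have "f 0 = f n + f (-n)" using h[of n "-n"] by simp
    then show ?thesis using f0 by (simp add: eq_neg_iff_add_eq_0 add.commute)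
  qed
  show ?thesis
  proof (cases "m \<ge> 0")
    case True
    then have e: "m = int (nat m)" by simp
    show ?thesis using nat[of "nat m"] e True by (simp add: of_nat_nat)
  next
    case False
    have p: "f (-m) = of_int (-m) * f 1" using nat[of "nat (-m)"] False by (simp add: of_nat_nat)
    then show ?thesis using neg[of "-m"] by simp
  qed
qed

lemma zero3:
  fixes f :: "int \<Rightarrow> complex"
  assumes h: "\<And>m n. m \<noteq> n \<Longrightarrow> f m + f n = 0"
  shows "f m = 0"
proof -
  have "f m + f (m+1) = 0" "f m + f (m+2) = 0" "f (m+1) + f (m+2) = 0" using h by auto
  then have "f (m+1) = - f m" "f (m+2) = - f m" "f (m+1) + f (m+2) = 0"
    by (metis add.commute add_eq_0_iff2)+
  then show ?thesis by simp
qed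

lemma Tf_unique:
  assumes "Tf lam a b c d (ev (Lb 1)) = Tf lam a' b' c' d' (ev (Lb 1))"
    "Tf lam a b c d (ev (Gb 0)) = Tf lam a' b' c' d' (ev (Gb 0))"
  shows "a = a' \<and> b = b' \<and> c = c' \<and> d = d'"
proof -
  have 1: "a = a'" using fun_cong[OF assms(1), of "Lb 1"] by (simp add: Tf_def ev_apply)
  have 2: "b = b'" using fun_cong[OF assms(1), of "Ib 1"] by (simp add: Tf_def ev_apply)
  have 3: "d = d'" using fun_cong[OF assms(2), of "Gb 0"] 1 by (simp add: Tf_def ev_apply)
  have 4: "c = c'" using fun_cong[OF assms(2), of "Hb 0"] 1 2 by (simp add: Tf_def ev_apply)
  show ?thesis using 1 2 3 4 by simp
qed




locale sd =
  fixes lam :: complex and D :: "(basis \<Rightarrow> complex) \<Rightarrow> basis \<Rightarrow> complex"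
  assumes sd: "even_superder_deg0 lam D"
begin

lemma DV: "x \<in> Vsp \<Longrightarrow> D x \<in> Vsp" using sd unfolding even_superder_deg0_def by blast
lemma Dlin: "lin D" using sd unfolding even_superder_deg0_def lin_def by blast
lemma Dder: "x \<in> Vsp \<Longrightarrow> y \<in> Vsp \<Longrightarrow> D (br lam x y) = (\<lambda>c. br lam (D x) y c + br lam x (D y) c)"
  using sd unfolding even_superder_deg0_def by blast

lemma Dout: "D (ev u) t \<noteq> 0 \<Longrightarrow> t = u \<or> t = flip u"
proof -
  assume nz: "D (ev u) t \<noteq> 0"
  have par: "evenb t = evenb u"
  proof (cases "evenb u")
    case True
    have "\<forall>b. ev u b \<noteq> 0 \<longrightarrow> evenb b" using True by (simp add: ev_apply)
    then have "evenb t" using sd nz unfolding even_superder_deg0_def by (meson ev_Vsp)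
    then show ?thesis using True by simp
  next
    case False
    have "\<forall>b. ev u b \<noteq> 0 \<longrightarrow> \<not> evenb b" using False by (simp add: ev_apply)
    then have "\<not> evenb t" using sd nz unfolding even_superder_deg0_def by (meson ev_Vsp)
    then show ?thesis using False by simp
  qed
  have "\<forall>b. ev u b \<noteq> 0 \<longrightarrow> idx b = idx u" by (simp add: ev_apply)
  then have "idx t = idx u" using sd nz unfolding even_superder_deg0_def by (meson ev_Vsp)
  then show ?thesis using same_class par by blast
qed

lemma Dform: "D (ev u) = (\<lambda>t. D (ev u) u * ev u t + D (ev u) (flip u) * ev (flip u) t)"
proof
  fix t
  show "D (ev u) t = D (ev u) u * ev u t + D (ev u) (flip u) * ev (flip u) t"
  proof (cases "t = u \<or> t = flip u")
    case True then show ?thesis by (auto simp: ev_apply)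
  next
    case False then show ?thesis using Dout by (auto simp: ev_apply)
  qed
qed

lemma Dbas: "D (brb lam u v) t = D (ev u) u * brb lam u v t + D (ev u) (flip u) * brb lam (flip u) v t
       + D (ev v) v * brb lam u v t + D (ev v) (flip v) * brb lam u (flip v) t"
  using Dder[of "ev u" "ev v"] br_form_left[OF Dform, of "ev v" lam] br_form_right[OF Dform, of "ev u" lam]
  by (simp add: fun_eq_iff)

lemma Dhom: "D (\<lambda>c. s * ev w c) = (\<lambda>c. s * D (ev w) c)"
  using lin_hom[OF Dlin, of "ev w" s] by simp

lemma Dadd2: "D (\<lambda>c. s * ev w c + s' * ev w' c) = (\<lambda>c. s * D (ev w) c + s' * D (ev w') c)"
  using lin_add[OF Dlin, of "\<lambda>c. s * ev w c" "\<lambda>c. s' * ev w' c"] Dhom Vsp_smult[OF ev_Vsp]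
  by simp

definition "A m = D (ev (Lb m)) (Lb m)"
definition "B m = D (ev (Lb m)) (Ib m)"
definition "C m = D (ev (Ib m)) (Lb m)"
definition "Di m = D (ev (Ib m)) (Ib m)"
definition "E k = D (ev (Gb k)) (Gb k)"
definition "F k = D (ev (Gb k)) (Hb k)"
definition "G k = D (ev (Hb k)) (Gb k)"
definition "H k = D (ev (Hb k)) (Hb k)"

lemma e1a: "m \<noteq> n \<Longrightarrow> A (m + n) = A m + A n"
proof -
  assume mn: "m \<noteq> n"
  have "of_int (m - n) * A (m + n) = of_int (m - n) * (A m + A n)"
    using Dbas[of "Lb m" "Lb n" "Lb (m+n)"] unfolding brb.simps Dhom by (simp add: ev_apply A_def algebra_simps)
  then show ?thesis using mn by simp
qed

lemma e1b: "m \<noteq> n \<Longrightarrow> B (m + n) = B m + B n"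
proof -
  assume mn: "m \<noteq> n"
  have "of_int (m - n) * B (m + n) = of_int (m - n) * (B m + B n)"
    using Dbas[of "Lb m" "Lb n" "Ib (m+n)"] unfolding brb.simps Dhom by (simp add: ev_apply B_def algebra_simps)
  then show ?thesis using mn by simp
qed

lemma e2: "m \<noteq> n \<Longrightarrow> Di (m + n) = A m + Di n"
proof -
  assume mn: "m \<noteq> n"
  have "of_int (m - n) * Di (m + n) = of_int (m - n) * (A m + Di n)"
    using Dbas[of "Lb m" "Ib n" "Ib (m+n)"] unfolding brb.simps Dhom by (simp add: ev_apply A_def Di_def algebra_simps)
  then show ?thesis using mn by simp
qed

lemma e3: "m \<noteq> n \<Longrightarrow> C m + C n = 0"
proof -
  assume mn: "m \<noteq> n"
  have "0 = of_int (m - n) * (C m + C n)"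
    using Dbas[of "Ib m" "Ib n" "Ib (m+n)"] lin_zero[OF Dlin] unfolding brb.simps by (simp add: ev_apply C_def algebra_simps)
  then show ?thesis using mn by simp
qed

lemma e4: "Di (k + l + 1) = E k + E l"
  using Dbas[of "Gb k" "Gb l" "Ib (k+l+1)"] unfolding brb.simps by (simp add: ev_apply Di_def E_def)

lemma e5g: "(of_int m - 2 * hp k) * G (m + k) = C m * (of_int m / 2 - hp k)"
  using Dbas[of "Ib m" "Gb k" "Gb (m+k)"] unfolding brb.simps Dhom by (simp add: ev_apply C_def G_def algebra_simps)

lemma e5h: "(of_int m - 2 * hp k) * H (m + k) = (of_int m - 2 * hp k) * (Di m + E k) + C m * (lam * (of_int m + 1))"
  using Dbas[of "Ib m" "Gb k" "Hb (m+k)"] unfolding brb.simps Dhom by (simp add: ev_apply C_def H_def Di_def E_def algebra_simps)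

lemma e6h: "(of_int m / 2 - hp k) * F (m + k) + lam * (of_int m + 1) * H (m + k)
   = lam * (of_int m + 1) * (A m + E k) + B m * (of_int m - 2 * hp k) + F k * (of_int m / 2 - hp k)"
  using Dbas[of "Lb m" "Gb k" "Hb (m+k)"] unfolding brb.simps Dadd2 by (simp add: ev_apply A_def B_def E_def F_def H_def algebra_simps)


lemma A_lin: "A m = of_int m * A 1" by (rule additive) (rule e1a)
lemma B_lin: "B m = of_int m * B 1" by (rule additive) (rule e1b)
lemma C0: "C m = 0" by (rule zero3) (rule e3)

lemma Di_form: "Di m = Di 0 + A m"
proof (cases "m = 0")
  case True then show ?thesis using A_lin[of 0] by simp
next
  case False then show ?thesis using e2[of m 0] by simp
qed

lemma E_form: "2 * E k = Di 0 + (2 * of_int k + 1) * A 1"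
  using e4[of k k] Di_form[of "k + k + 1"] A_lin[of "k + k + 1"] by (simp add: algebra_simps)

lemma hp_nz: "hp k \<noteq> 0"
proof
  assume "hp k = 0"
  then have "(of_int (2 * k + 1) :: complex) = 0" by (simp add: hp_def field_simps)
  then have "2 * k + 1 = 0" by (simp only: of_int_eq_0_iff)
  then show False by presburger
qed

lemma G0: "G k = 0"
  using e5g[of 0 k] C0[of 0] hp_nz[of k] by simp

lemma H_form: "H k = Di 0 + E k"
  using e5h[of 0 k] C0[of 0] hp_nz[of k] by simp

lemma lamDi: "lam * Di 0 = 0"
proof -
  have "lam * H 0 = lam * E 0" using e6h[of 0 0] A_lin[of 0] B_lin[of 0] by simp
  then show ?thesis using H_form[of 0] by (simp add: algebra_simps)
qed

lemma E_shift: "E (m + k) = E k + A m"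
proof -
  have "2 * E (m + k) = 2 * (E k + A m)"
    using E_form[of "m+k"] E_form[of k] A_lin[of m] by (simp add: algebra_simps)
  then show ?thesis by (metis mult_cancel_left zero_neq_numeral)
qed

lemma F_step:
  assumes "m \<noteq> 2 * k + 1"
  shows "F (m + k) = F k + 2 * of_int m * B 1"
proof -
  have "(of_int m / 2 - hp k) * (F (m + k) - F k - 2 * of_int m * B 1) = 0"
  proof (cases "lam = 0")
    case True
    then show ?thesis using e6h[of m k] B_lin[of m] by (simp add: algebra_simps)
  next
    case False
    then have "Di 0 = 0" using lamDi by simp
    then show ?thesis using e6h[of m k] B_lin[of m] H_form[of "m+k"] E_shift[of m k] by (simp add: algebra_simps)
  qed
  moreover have "of_int m / 2 - hp k \<noteq> 0"
  proof
    assume "of_int m / 2 - hp k = 0"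
    then have "(of_int (m - 2 * k - 1) :: complex) = 0" by (simp add: hp_def field_simps)
    then have "m - 2 * k - 1 = 0" by (simp only: of_int_eq_0_iff)
    then show False using assms by simp
  qed
  ultimately have d: "F (m + k) - F k - 2 * of_int m * B 1 = 0" by simp
  have "F (m+k) = (F (m + k) - F k - 2 * of_int m * B 1) + (F k + 2 * of_int m * B 1)" by (simp add: algebra_simps)
  then show ?thesis using d by simp
qed

lemma F_form: "F j = F 0 + 2 * of_int j * B 1"
proof (cases "j = 1")
  case True
  have "F (-1 + 2) = F 2 + 2 * of_int (-1) * B 1" by (rule F_step) simp
  moreover have "F (2 + 0) = F 0 + 2 * of_int 2 * B 1" by (rule F_step) simp
  ultimately show ?thesis using True by simp
next
  case False
  then show ?thesis using F_step[of j 0] by simp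
qed

definition "a0 = - A 1"
definition "b0 = - B 1"
definition "d0 = Di 0 / 2"
definition "c0 = F 0 - B 1 + lam * A 1"

lemma D_ev: "D (ev u) = Tf lam a0 b0 c0 d0 (ev u)"
proof
  fix t
  show "D (ev u) t = Tf lam a0 b0 c0 d0 (ev u) t"
  proof (cases u)
    case (Lb m)
    then show ?thesis using A_lin[of m] B_lin[of m]
      by (subst Dform) (cases t; auto simp: ev_apply Tf_def A_def B_def a0_def b0_def)
  next
    case (Ib m)
    then show ?thesis using A_lin[of m] Di_form[of m] C0[of m]
      by (subst Dform) (cases t; auto simp: ev_apply Tf_def A_def Di_def C_def a0_def d0_def)
  next
    case (Gb k)
    then show ?thesis using A_lin[of m] E_form[of k] F_form[of k]
      by (subst Dform) (cases t; auto simp: ev_apply Tf_def E_def F_def a0_def b0_def c0_def d0_def hp_def field_simps)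
  next
    case (Hb k)
    then show ?thesis using E_form[of k] H_form[of k] G0[of k]
      by (subst Dform) (cases t; auto simp: ev_apply Tf_def G_def H_def a0_def d0_def hp_def field_simps)
  qed
qed

lemma forward: "(lam \<noteq> 0 \<longrightarrow> d0 = 0) \<and> (\<forall>x\<in>Vsp. D x = Tf lam a0 b0 c0 d0 x)"
proof
  show "lam \<noteq> 0 \<longrightarrow> d0 = 0" using lamDi by (auto simp: d0_def)
  show "\<forall>x\<in>Vsp. D x = Tf lam a0 b0 c0 d0 x"
    using lin_eq[OF Dlin lin_Tf D_ev] by blast
qed

end




theorem lemma2p7:
  fixes lam :: complex
    and D :: "(basis \<Rightarrow> complex) \<Rightarrow> basis \<Rightarrow> complex"
  shows "even_superder_deg0 lam D \<longleftrightarrow>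
    (\<exists>!(a, b, c, d). (lam \<noteq> 0 \<longrightarrow> d = 0) \<and>
       (\<forall>x\<in>Vsp. D x = (\<lambda>t. a * ad lam (ev (Lb 0)) x t + b * ad lam (ev (Ib 0)) x t
                            + c * partialG x t + d * partialD x t)))"
proof -
  have key: "\<And>a b c d. (\<forall>x\<in>Vsp. D x = (\<lambda>t. a * ad lam (ev (Lb 0)) x t + b * ad lam (ev (Ib 0)) x t
                            + c * partialG x t + d * partialD x t)) \<longleftrightarrow> (\<forall>x\<in>Vsp. D x = Tf lam a b c d x)"
    using TT_Tf unfolding TT_def by auto
  show ?thesis
  proof
    assume h: "even_superder_deg0 lam D"
    interpret sd lam D using h by unfold_locales
    show "\<exists>!(a, b, c, d). (lam \<noteq> 0 \<longrightarrow> d = 0) \<and>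
       (\<forall>x\<in>Vsp. D x = (\<lambda>t. a * ad lam (ev (Lb 0)) x t + b * ad lam (ev (Ib 0)) x t
                            + c * partialG x t + d * partialD x t))"
    proof (rule ex1I[of _ "(a0, b0, c0, d0)"])
      show "case (a0, b0, c0, d0) of (a, b, c, d) \<Rightarrow> (lam \<noteq> 0 \<longrightarrow> d = 0) \<and>
       (\<forall>x\<in>Vsp. D x = (\<lambda>t. a * ad lam (ev (Lb 0)) x t + b * ad lam (ev (Ib 0)) x t
                            + c * partialG x t + d * partialD x t))"
        using forward key by simp
    next
      fix z assume hz: "case z of (a, b, c, d) \<Rightarrow> (lam \<noteq> 0 \<longrightarrow> d = 0) \<and>
       (\<forall>x\<in>Vsp. D x = (\<lambda>t. a * ad lam (ev (Lb 0)) x t + b * ad lam (ev (Ib 0)) x t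
                            + c * partialG x t + d * partialD x t))"
      obtain a b c d where z: "z = (a, b, c, d)" by (cases z) auto
      have T: "\<forall>x\<in>Vsp. D x = Tf lam a b c d x" using hz key unfolding z by simp
      have T0: "\<forall>x\<in>Vsp. D x = Tf lam a0 b0 c0 d0 x" using forward by simp
      have "a = a0 \<and> b = b0 \<and> c = c0 \<and> d = d0"
        by (rule Tf_unique[where lam=lam]) (use T T0 ev_Vsp in metis)+
      then show "z = (a0, b0, c0, d0)" using z by simp
    qed
  next
    assume h: "\<exists>!(a, b, c, d). (lam \<noteq> 0 \<longrightarrow> d = 0) \<and>
       (\<forall>x\<in>Vsp. D x = (\<lambda>t. a * ad lam (ev (Lb 0)) x t + b * ad lam (ev (Ib 0)) x t
                            + c * partialG x t + d * partialD x t))"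
    then obtain z where hz: "case z of (a, b, c, d) \<Rightarrow> (lam \<noteq> 0 \<longrightarrow> d = 0) \<and>
       (\<forall>x\<in>Vsp. D x = (\<lambda>t. a * ad lam (ev (Lb 0)) x t + b * ad lam (ev (Ib 0)) x t
                            + c * partialG x t + d * partialD x t))" by blast
    obtain a b c d where z: "z = (a, b, c, d)" by (cases z) auto
    have T: "\<forall>x\<in>Vsp. D x = Tf lam a b c d x" and ld: "lam = 0 \<or> d = 0"
      using hz key unfolding z by auto
    show "even_superder_deg0 lam D" by (rule backward[OF ld T])
  qed
qed



end
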